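(* Let $r_1,r_2\in(0,1)$, $a_1,a_2\in(1,\infty)$, and for $i=1,2$ let $l_i$ be Lebesgue measurable, integrable, with $\int_{\mathbb{R}}l_i=1$, $\int_{\mathbb{R}}l_i(y)e^{\lambda y}dy<\infty$ for all $\lambda\in\mathbb{R}$, and $l_i(y)=l_i(-y)\ge0$. Define $Q=(Q_1,Q_2)$ on $\mathcal{C}_{[\theta,\mathbf{1}]}$ by \[ Q_1(\phi,\psi)(t)=1-\int_{\mathbb{R}}(1-\phi (y))e^{r_{1}(\phi (y)-a_{1}\psi(y))}l_{1}(t-y)\,dy,\quad Q_2(\phi,\psi)(t)=\int_{\mathbb{R}} \psi (y)e^{r_{2}(1-a_2-\psi (y)+a_{2}\phi (y))}l_{2}(t-y)\,dy. \] Then $Q$ maps $\mathcal{C}_{[\theta,\mathbf{1}]}$ into $\mathcal{C}_{[\theta,\mathbf{1}]}$, and: (i) $Q:\mathcal{C}_{[\theta,\mathbf{1}]}\to\mathcal{C}_{[\theta,\mathbf{1}]}$ is continuous with respect to the compact-open topology; (ii) $Q$ is order preserving, i.e. $Q[\Phi]\ge Q[\Psi]$ whenever $\Phi\ge\Psi$ with $\Phi,\Psi\in\mathcal{C}_{[\theta,\mathbf{1}]}$; (iii) $Q:\mathcal{C}_{[\theta,\mathbf{1}]}\to\mathcal{C}_{[\theta,\mathbf{1}]}$ is compact with respect to the compact-open topology.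
   Context: $\mathcal{C}$ is the space of uniformly continuous bounded functions $\mathbb{R}\to\mathbb{R}^2$, with the compact-open topology (convergence uniform on compact subsets) and the componentwise pointwise order; $\mathcal{C}_{[\theta,\mathbf{1}]}=\{U\in\mathcal{C}: (0,0)\le U(x)\le (1,1)\ \forall x\}$. *)

theory Defs
  imports "HOL-Analysis.Analysis"
begin

definition UCB :: "(real \<Rightarrow> real \<times> real) set" where
  "UCB = {U. uniformly_continuous_on UNIV U \<and> bounded (range U)}"

definition C01 :: "(real \<Rightarrow> real \<times> real) set" where
  "C01 = {U \<in> UCB. \<forall>x. 0 \<le> fst (U x) \<and> fst (U x) \<le> 1 \<and> 0 \<le> snd (U x) \<and> snd (U x) \<le> 1}"

definition fle :: "(real \<Rightarrow> real \<times> real) \<Rightarrow> (real \<Rightarrow> real \<times> real) \<Rightarrow> bool" where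
  "fle U V \<longleftrightarrow> (\<forall>x. fst (U x) \<le> fst (V x) \<and> snd (U x) \<le> snd (V x))"

definition compact_open :: "(real \<Rightarrow> real \<times> real) topology" where
  "compact_open = topology (\<lambda>S. S \<subseteq> UCB \<and>
     (\<forall>f\<in>S. \<exists>K e. compact K \<and> e > 0 \<and>
        {g \<in> UCB. \<forall>x\<in>K. dist (g x) (f x) < e} \<subseteq> S))"

definition Qmap :: "real \<Rightarrow> real \<Rightarrow> real \<Rightarrow> real \<Rightarrow> (real \<Rightarrow> real) \<Rightarrow> (real \<Rightarrow> real)
    \<Rightarrow> (real \<Rightarrow> real \<times> real) \<Rightarrow> (real \<Rightarrow> real \<times> real)" where
  "Qmap r1 r2 a1 a2 l1 l2 U = (\<lambda>t.
     (1 - (LINT y|lebesgue. (1 - fst (U y)) * exp (r1 * (fst (U y) - a1 * snd (U y))) * l1 (t - y)),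
      (LINT y|lebesgue. snd (U y) * exp (r2 * (1 - a2 - snd (U y) + a2 * fst (U y))) * l2 (t - y))))"

definition kernel :: "(real \<Rightarrow> real) \<Rightarrow> bool" where
  "kernel l \<longleftrightarrow> l \<in> borel_measurable lebesgue \<and> integrable lebesgue l \<and>
     (LINT y|lebesgue. l y) = 1 \<and>
     (\<forall>c::real. integrable lebesgue (\<lambda>y. l y * exp (c * y))) \<and>
     (\<forall>y. l y = l (- y) \<and> 0 \<le> l y)"

end

theory Submission
  imports Defs "HOL-Library.Diagonal_Subsequence"
begin


lemma int_shift:
  fixes f :: "real \<Rightarrow> real"
  shows "(LINT x|lebesgue. f (x + h)) = (LINT x|lebesgue. f x)"
  using lebesgue_integral_real_affine[of 1 f h] by (simp add: add.commute)

lemma integrable_shift: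
  fixes f :: "real \<Rightarrow> real"
  assumes "integrable lebesgue f" shows "integrable lebesgue (\<lambda>x. f (x + h))"
  using lebesgue_integrable_real_affine[OF assms, of 1 h] by (simp add: add.commute)

lemma int_reflect:
  fixes f :: "real \<Rightarrow> real"
  shows "(LINT y|lebesgue. f (t - y)) = (LINT x|lebesgue. f x)"
  using lebesgue_integral_real_affine[of "-1" f t] by simp

lemma integrable_reflect:
  fixes f :: "real \<Rightarrow> real"
  assumes "integrable lebesgue f" shows "integrable lebesgue (\<lambda>y. f (t - y))"
  using lebesgue_integrable_real_affine[OF assms, of "-1" t] by simp



lemma ind_int_shift:
  fixes S :: "real set" and h :: real
  assumes "S \<in> lmeasurable"
  shows "integrable lebesgue (\<lambda>x. indicator S (x + h) :: real)"
    "(LINT x|lebesgue. (indicator S (x + h) :: real)) = measure lebesgue S"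
proof -
  have i: "integrable lebesgue (indicator S :: real \<Rightarrow> real)"
    using assms by (simp add: lmeasurable_iff_integrable)
  show "integrable lebesgue (\<lambda>x. indicator S (x + h) :: real)"
    using integrable_shift[OF i] .
  show "(LINT x|lebesgue. (indicator S (x + h) :: real)) = measure lebesgue S"
    by (subst int_shift) simp
qed

lemma meas_lt:
  assumes "S \<in> fmeasurable M" "emeasure M S < ennreal c"
  shows "measure M S < c"
proof -
  have "emeasure M S = ennreal (measure M S)" using assms(1) by (simp add: emeasure_eq_measure2)
  then show ?thesis using assms(2) by (simp add: ennreal_less_iff)
qed

lemma ind_shiftc:
  fixes A :: "real set" and e :: real
  assumes A: "A \<in> sets lebesgue" "emeasure lebesgue A < \<infinity>" and e: "e > 0"
  shows "\<exists>d>0. \<forall>h. \<bar>h\<bar> < d \<longrightarrow> (LINT x|lebesgue. \<bar>indicator A (x+h) - indicator A x :: real\<bar>) < e"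
proof -
  have Alm: "A \<in> lmeasurable" using A by (intro fmeasurableI) auto
  define B where "B n = A \<inter> cball 0 (real n)" for n :: nat
  have Bs: "range B \<subseteq> sets lebesgue" using A(1) by (auto simp: B_def)
  have Binc: "incseq B" unfolding B_def incseq_def by auto
  have UB: "(\<Union>n. B n) = A" by (auto simp: B_def real_arch_simple)
  have "(\<lambda>n. measure lebesgue (B n)) \<longlonglongrightarrow> measure lebesgue A"
    using Lim_measure_incseq[OF Bs Binc] UB A(2) by auto
  then obtain n where n: "measure lebesgue A - measure lebesgue (B n) < e/16"
  proof -
    assume r: "\<And>n. measure lebesgue A - measure lebesgue (B n) < e / 16 \<Longrightarrow> thesis"
    have "\<forall>\<^sub>F n in sequentially. dist (measure lebesgue (B n)) (measure lebesgue A) < e/16"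
      using tendsto_iff[THEN iffD1, OF \<open>(\<lambda>n. measure lebesgue (B n)) \<longlonglongrightarrow> measure lebesgue A\<close>, rule_format, of "e/16"] e
      by simp
    then obtain n where "dist (measure lebesgue (B n)) (measure lebesgue A) < e/16"
      using eventually_sequentially by auto
    then show thesis using r[of n] unfolding dist_real_def by (cases "measure lebesgue (B n) - measure lebesgue A \<ge> 0") linarith+
  qed
  have Bn: "B n \<in> sets lebesgue" using Bs by auto
  have AB: "measure lebesgue (A - B n) < e/16"
    using measure_Diff[of lebesgue A "B n"] A Bn n by (auto simp: B_def)
  obtain T where T: "closed T" "T \<subseteq> B n" "B n - T \<in> lmeasurable"
      "emeasure lebesgue (B n - T) < ennreal (e/16)"
    using sets_lebesgue_inner_closed[OF Bn, of "e/16"] e by auto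
  have cT: "compact T"
    using T(1,2) by (metis B_def bounded_cball bounded_subset compact_eq_bounded_closed inf.cobounded2 order_trans)
  have BT: "measure lebesgue (B n - T) < e/16"
    using meas_lt[OF T(3,4)] .
  have TA: "T \<subseteq> A" using T(2) by (auto simp: B_def)
  have Tl: "T \<in> lmeasurable" using cT by (simp add: lmeasurable_compact)
  have AK: "measure lebesgue (A - T) < e/8"
  proof -
    have "A - T = (A - B n) \<union> (B n - T)" using T(2) by (auto simp: B_def)
    then have "measure lebesgue (A - T) \<le> measure lebesgue (A - B n) + measure lebesgue (B n - T)"
      using measure_Un_le[of "A - B n" lebesgue "B n - T"] A(1) Bn T(3) by (auto dest: fmeasurableD)
    then show ?thesis using AB BT by linarith
  qed
  obtain U where U: "open U" "A \<subseteq> U" "U - A \<in> lmeasurable" "emeasure lebesgue (U - A) < ennreal (e/8)"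
    using sets_lebesgue_outer_open[OF A(1), of "e/8"] e by auto
  have UA: "measure lebesgue (U - A) < e/8"
    using meas_lt[OF U(3,4)] .
  have Ul: "U \<in> lmeasurable"
  proof -
    have "U = A \<union> (U - A)" using U(2) by auto
    then show ?thesis using Alm U(3) by (metis fmeasurable.Un)
  qed
  have UK: "measure lebesgue (U - T) < e/4"
  proof -
    have "U - T = (U - A) \<union> (A - T)" using U(2) TA by auto
    then have "measure lebesgue (U - T) \<le> measure lebesgue (U - A) + measure lebesgue (A - T)"
      using measure_Un_le[of "U - A" lebesgue "A - T"] A(1) U(3) Tl by auto
    then show ?thesis using UA AK by linarith
  qed
  obtain d where d: "d > 0" "(\<Union>x\<in>T. ball x d) \<subseteq> U"
    using compact_subset_open_imp_ball_epsilon_subset[OF cT U(1)] TA U(2) by blast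
  have AKl: "A - T \<in> lmeasurable" using Alm Tl by (simp add: fmeasurable_Diff)
  have UKl: "U - T \<in> lmeasurable" using Ul Tl by (simp add: fmeasurable_Diff)
  show ?thesis
  proof (intro exI[of _ d] conjI allI impI d(1))
    fix h :: real assume h: "\<bar>h\<bar> < d"
    define R where "R x = indicator (A - T) (x + h) + indicator (A - T) x
       + indicator (U - T) (x + h) + (indicator (U - T) x :: real)" for x
    have pt: "\<bar>indicator A (x+h) - indicator A x :: real\<bar> \<le> R x" for x
    proof -
      have b1: "x \<in> U" if "x + h \<in> T" using d(2) h that
        by (force simp: dist_real_def)
      have b2: "x + h \<in> U" if "x \<in> T" using d(2) h that
        by (force simp: dist_real_def)
      show ?thesis using b1 b2 TA unfolding R_def
        by (auto simp: indicator_def)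
    qed
    have iR: "integrable lebesgue R"
      unfolding R_def using ind_int_shift[OF AKl] ind_int_shift[OF UKl]
        ind_int_shift[OF AKl, of 0] ind_int_shift[OF UKl, of 0] by simp
    have "(LINT x|lebesgue. R x) = 2 * measure lebesgue (A - T) + 2 * measure lebesgue (U - T)"
      unfolding R_def using ind_int_shift[OF AKl] ind_int_shift[OF UKl]
        ind_int_shift[OF AKl, of 0] ind_int_shift[OF UKl, of 0] by simp
    also have "\<dots> < e" using AK UK e by linarith
    finally have "(LINT x|lebesgue. R x) < e" .
    moreover have "(LINT x|lebesgue. \<bar>indicator A (x+h) - indicator A x :: real\<bar>) \<le> (LINT x|lebesgue. R x)"
      by (rule integral_mono'[OF iR]) (use pt in \<open>auto simp: R_def\<close>)
    ultimately show "(LINT x|lebesgue. \<bar>indicator A (x+h) - indicator A x :: real\<bar>) < e" by linarith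
  qed
qed



definition shiftc :: "(real \<Rightarrow> real) \<Rightarrow> bool" where
  "shiftc f \<longleftrightarrow> (\<forall>e>0. \<exists>d>0. \<forall>h. \<bar>h\<bar> < d \<longrightarrow> (LINT x|lebesgue. \<bar>f (x+h) - f x\<bar>) < e)"

lemma integrable_shift_diff:
  fixes f :: "real \<Rightarrow> real"
  assumes "integrable lebesgue f"
  shows "integrable lebesgue (\<lambda>x. \<bar>f (x+h) - f x\<bar>)"
  using integrable_shift[OF assms, of h] assms by auto

lemma integrable_shiftc:
  fixes f :: "real \<Rightarrow> real"
  assumes "integrable lebesgue f"
  shows "shiftc f"
  using assms
proof (induct rule: integrable_induct)
  case (base A c)
  show ?case unfolding shiftc_def
  proof (intro allI impI)
    fix e :: real assume e: "e > 0"
    show "\<exists>d>0. \<forall>h. \<bar>h\<bar> < d \<longrightarrow> (LINT x|lebesgue. \<bar>indicator A (x + h) *\<^sub>R c - indicator A x *\<^sub>R c\<bar>) < e"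
    proof (cases "c = 0")
      case True then show ?thesis using e by (auto intro: exI[of _ 1])
    next
      case False
      then have ce: "e / \<bar>c\<bar> > 0" using e by simp
      obtain d where d: "d > 0" "\<forall>h. \<bar>h\<bar> < d \<longrightarrow> (LINT x|lebesgue. \<bar>indicator A (x+h) - indicator A x :: real\<bar>) < e / \<bar>c\<bar>"
        using ind_shiftc[OF base(1,2) ce] by blast
      show ?thesis
      proof (intro exI[of _ d] conjI allI impI d(1))
        fix h :: real assume h: "\<bar>h\<bar> < d"
        have eq: "(\<lambda>x. \<bar>indicator A (x + h) *\<^sub>R c - indicator A x *\<^sub>R c\<bar>) = (\<lambda>x. \<bar>c\<bar> * \<bar>indicator A (x+h) - indicator A x :: real\<bar>)"
          by (auto simp: indicator_def)
        have "(LINT x|lebesgue. \<bar>indicator A (x + h) *\<^sub>R c - indicator A x *\<^sub>R c\<bar>) = \<bar>c\<bar> * (LINT x|lebesgue. \<bar>indicator A (x+h) - indicator A x :: real\<bar>)"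
          unfolding eq by simp
        also have "\<dots> < \<bar>c\<bar> * (e / \<bar>c\<bar>)" using d(2) h False by (intro mult_strict_left_mono) auto
        also have "\<dots> = e" using False by simp
        finally show "(LINT x|lebesgue. \<bar>indicator A (x + h) *\<^sub>R c - indicator A x *\<^sub>R c\<bar>) < e" .
      qed
    qed
  qed
next
  case (add f g)
  show ?case unfolding shiftc_def
  proof (intro allI impI)
    fix e :: real assume e: "e > 0"
    obtain d1 where d1: "d1 > 0" "\<forall>h. \<bar>h\<bar> < d1 \<longrightarrow> (LINT x|lebesgue. \<bar>f (x+h) - f x\<bar>) < e/2"
      using add(2) e unfolding shiftc_def by (meson half_gt_zero)
    obtain d2 where d2: "d2 > 0" "\<forall>h. \<bar>h\<bar> < d2 \<longrightarrow> (LINT x|lebesgue. \<bar>g (x+h) - g x\<bar>) < e/2"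
      using add(4) e unfolding shiftc_def by (meson half_gt_zero)
    show "\<exists>d>0. \<forall>h. \<bar>h\<bar> < d \<longrightarrow> (LINT x|lebesgue. \<bar>f (x + h) + g (x + h) - (f x + g x)\<bar>) < e"
    proof (intro exI[of _ "min d1 d2"] conjI allI impI)
      show "min d1 d2 > 0" using d1 d2 by simp
      fix h :: real assume h: "\<bar>h\<bar> < min d1 d2"
      have i1: "integrable lebesgue (\<lambda>x. \<bar>f (x+h) - f x\<bar>)" using integrable_shift_diff[OF add(1)] .
      have i2: "integrable lebesgue (\<lambda>x. \<bar>g (x+h) - g x\<bar>)" using integrable_shift_diff[OF add(3)] .
      have "(LINT x|lebesgue. \<bar>f (x + h) + g (x + h) - (f x + g x)\<bar>)
          \<le> (LINT x|lebesgue. \<bar>f (x+h) - f x\<bar> + \<bar>g (x+h) - g x\<bar>)"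
        by (rule integral_mono') (use i1 i2 in auto)
      also have "\<dots> = (LINT x|lebesgue. \<bar>f (x+h) - f x\<bar>) + (LINT x|lebesgue. \<bar>g (x+h) - g x\<bar>)"
        using i1 i2 by simp
      also have "\<dots> < e" using d1(2)[rule_format, of h] d2(2)[rule_format, of h] h by simp
      finally show "(LINT x|lebesgue. \<bar>f (x + h) + g (x + h) - (f x + g x)\<bar>) < e" .
    qed
  qed
next
  case (lim f s)
  have fm: "f \<in> borel_measurable lebesgue" using lim(5) by (rule borel_measurable_integrable)
  have sm: "\<And>i. s i \<in> borel_measurable lebesgue" using lim(1) by (rule borel_measurable_integrable)
  have c1: "(\<lambda>x. 0::real) \<in> borel_measurable lebesgue" by simp
  have c2: "\<And>i. (\<lambda>x. \<bar>s i x - f x\<bar>) \<in> borel_measurable lebesgue" using fm sm by measurable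
  have c3: "integrable lebesgue (\<lambda>x. 3 * \<bar>f x\<bar>)" using lim(5) by simp
  have c4: "AE x in lebesgue. (\<lambda>i. \<bar>s i x - f x\<bar>) \<longlonglongrightarrow> 0"
  proof (rule AE_I2)
    fix x :: real assume "x \<in> space lebesgue"
    then have "(\<lambda>i. s i x - f x) \<longlonglongrightarrow> 0" using lim(3) by (simp add: LIM_zero)
    then show "(\<lambda>i. \<bar>s i x - f x\<bar>) \<longlonglongrightarrow> 0" by (simp add: tendsto_rabs_zero)
  qed
  have c5: "\<And>i. AE x in lebesgue. norm \<bar>s i x - f x\<bar> \<le> 3 * \<bar>f x\<bar>"
  proof (intro AE_I2)
    fix i and x :: real assume "x \<in> space lebesgue"
    then have "\<bar>s i x\<bar> \<le> 2 * \<bar>f x\<bar>" using lim(4) by simp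
    then show "norm \<bar>s i x - f x\<bar> \<le> 3 * \<bar>f x\<bar>" by simp
  qed
  have conv: "(\<lambda>i. LINT x|lebesgue. \<bar>s i x - f x\<bar>) \<longlonglongrightarrow> 0"
    using integral_dominated_convergence[OF c1 c2 c3 c4 c5]
    by simp
  show ?case unfolding shiftc_def
  proof (intro allI impI)
    fix e :: real assume e: "e > 0"
    then have "e/3 > 0" by simp
    then obtain i where i: "(LINT x|lebesgue. \<bar>s i x - f x\<bar>) < e/3"
    proof -
      obtain no where "\<forall>n\<ge>no. dist (LINT x|lebesgue. \<bar>s n x - f x\<bar>) 0 < e/3"
        using conv[unfolded LIMSEQ_def, rule_format, OF \<open>e/3 > 0\<close>] by blast
      then have "dist (LINT x|lebesgue. \<bar>s no x - f x\<bar>) 0 < e/3" by simp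
      then show ?thesis using that[of no] by (simp add: dist_real_def)
    qed
    obtain d where d: "d > 0" "\<forall>h. \<bar>h\<bar> < d \<longrightarrow> (LINT x|lebesgue. \<bar>s i (x+h) - s i x\<bar>) < e/3"
      using lim(2)[of i] \<open>e/3 > 0\<close> unfolding shiftc_def by blast
    show "\<exists>d>0. \<forall>h. \<bar>h\<bar> < d \<longrightarrow> (LINT x|lebesgue. \<bar>f (x + h) - f x\<bar>) < e"
    proof (intro exI[of _ d] conjI allI impI d(1))
      fix h :: real assume h: "\<bar>h\<bar> < d"
      have idf: "integrable lebesgue (\<lambda>x. \<bar>s i x - f x\<bar>)" using lim(1)[of i] lim(5) by auto
      have i1: "integrable lebesgue (\<lambda>x. \<bar>s i (x+h) - f (x+h)\<bar>)"
        using integrable_shift[OF idf, of h] by simp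
      have i2: "integrable lebesgue (\<lambda>x. \<bar>s i (x+h) - s i x\<bar>)" using integrable_shift_diff[OF lim(1)] .
      have "(LINT x|lebesgue. \<bar>f (x + h) - f x\<bar>)
         \<le> (LINT x|lebesgue. \<bar>s i (x+h) - f (x+h)\<bar> + \<bar>s i (x+h) - s i x\<bar> + \<bar>s i x - f x\<bar>)"
        by (rule integral_mono') (use i1 i2 idf in auto)
      also have "\<dots> = (LINT x|lebesgue. \<bar>s i (x+h) - f (x+h)\<bar>) + (LINT x|lebesgue. \<bar>s i (x+h) - s i x\<bar>)
          + (LINT x|lebesgue. \<bar>s i x - f x\<bar>)"
        using i1 i2 idf by simp
      also have "(LINT x|lebesgue. \<bar>s i (x+h) - f (x+h)\<bar>) = (LINT x|lebesgue. \<bar>s i x - f x\<bar>)"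
        using int_shift[of "\<lambda>x. \<bar>s i x - f x\<bar>" h] by simp
      finally show "(LINT x|lebesgue. \<bar>f (x + h) - f x\<bar>) < e" using i d(2)[rule_format, OF h] by linarith
    qed
  qed
qed



definition wt :: "real \<Rightarrow> real" where "wt x = 1 / (1 + \<bar>x\<bar>)"

definition DD :: "(real \<Rightarrow> real \<times> real) \<Rightarrow> (real \<Rightarrow> real \<times> real) \<Rightarrow> real" where
  "DD f g = (SUP x. wt x * min 1 (dist (f x) (g x)))"

lemma wt_pos: "wt x > 0" and wt_le1: "wt x \<le> 1"
  by (auto simp: wt_def)

lemma wt_mono: "\<bar>x\<bar> \<le> \<bar>y\<bar> \<Longrightarrow> wt y \<le> wt x"
  by (auto simp: wt_def intro!: divide_left_mono)

lemma DD_term_le1: "wt x * min 1 (dist (f x) (g x)) \<le> 1"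
proof -
  have "wt x * min 1 (dist (f x) (g x)) \<le> 1 * 1"
    using wt_pos[of x] wt_le1[of x] by (intro mult_mono) auto
  then show ?thesis by simp
qed

lemma DD_bdd: "bdd_above (range (\<lambda>x. wt x * min 1 (dist (f x) (g x))))"
  by (rule bdd_aboveI2[where M=1]) (rule DD_term_le1)

lemma DD_ge: "wt x * min 1 (dist (f x) (g x)) \<le> DD f g"
  unfolding DD_def by (rule cSUP_upper[OF _ DD_bdd]) simp

lemma DD_le: "(\<And>x. wt x * min 1 (dist (f x) (g x)) \<le> c) \<Longrightarrow> DD f g \<le> c"
  unfolding DD_def by (rule cSUP_least) auto

lemma DD_nonneg: "0 \<le> DD f g"
proof -
  have "0 \<le> wt 0 * min 1 (dist (f 0) (g 0))" using wt_pos[of 0] by simp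
  also have "\<dots> \<le> DD f g" by (rule DD_ge)
  finally show ?thesis .
qed

lemma DD_commute: "DD f g = DD g f"
  unfolding DD_def by (simp add: dist_commute)

lemma DD_zero: "DD f g = 0 \<longleftrightarrow> f = g"
proof
  assume "f = g" then show "DD f g = 0" unfolding DD_def by simp
next
  assume 0: "DD f g = 0"
  show "f = g"
  proof
    fix x
    have "wt x * min 1 (dist (f x) (g x)) \<le> 0" using DD_ge[of x f g] 0 by simp
    then have "min 1 (dist (f x) (g x)) \<le> 0" using wt_pos[of x]
      by (meson mult_pos_pos not_le)
    then show "f x = g x" by (simp add: min_le_iff_disj)
  qed
qed

lemma DD_triangle: "DD f h \<le> DD f g + DD g h"
proof (rule DD_le)
  fix x
  have "min 1 (dist (f x) (h x)) \<le> min 1 (dist (f x) (g x)) + min 1 (dist (g x) (h x))"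
    using dist_triangle[of "f x" "h x" "g x"] zero_le_dist[of "f x" "g x"] zero_le_dist[of "g x" "h x"]
    unfolding min_def by (smt (verit))
  then have "wt x * min 1 (dist (f x) (h x)) \<le> wt x * min 1 (dist (f x) (g x)) + wt x * min 1 (dist (g x) (h x))"
    using wt_pos[of x] by (simp add: distrib_left[symmetric])
  also have "\<dots> \<le> DD f g + DD g h" using DD_ge[of x f g] DD_ge[of x g h] by linarith
  finally show "wt x * min 1 (dist (f x) (h x)) \<le> DD f g + DD g h" .
qed

lemma DD_metric: "Metric_space M DD"
  by unfold_locales (auto simp: DD_nonneg DD_commute DD_zero DD_triangle)

lemma DD_small_imp:
  assumes "DD f g < wt R * min 1 e" "\<bar>x\<bar> \<le> R" "e > 0"
  shows "dist (f x) (g x) < e"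
proof (rule ccontr)
  assume "\<not> dist (f x) (g x) < e"
  then have m: "min 1 e \<le> min 1 (dist (f x) (g x))" by (auto simp: min_def)
  have "wt R * min 1 e \<le> wt x * min 1 e" using wt_mono[of x R] assms(2,3)
    by (intro mult_right_mono) auto
  also have "\<dots> \<le> wt x * min 1 (dist (f x) (g x))" using m wt_pos[of x] by (intro mult_left_mono) auto
  also have "\<dots> \<le> DD f g" by (rule DD_ge)
  finally show False using assms(1) by simp
qed

lemma DD_small_suff:
  assumes "\<And>x. \<bar>x\<bar> \<le> R \<Longrightarrow> dist (f x) (g x) \<le> e" "wt R \<le> e" "R \<ge> 0"
  shows "DD f g \<le> e"
proof (rule DD_le)
  fix x
  show "wt x * min 1 (dist (f x) (g x)) \<le> e"
  proof (cases "\<bar>x\<bar> \<le> R")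
    case True
    have "wt x * min 1 (dist (f x) (g x)) \<le> 1 * dist (f x) (g x)"
      using wt_pos[of x] wt_le1[of x] by (intro mult_mono) auto
    then show ?thesis using assms(1)[OF True] by simp
  next
    case False
    have "wt x * min 1 (dist (f x) (g x)) \<le> wt x * 1"
      using wt_pos[of x] by (intro mult_left_mono) auto
    also have "\<dots> \<le> wt R" using wt_mono[of R x] False assms(3) by simp
    finally show ?thesis using assms(2) by simp
  qed
qed

lemma wt_small: "e > 0 \<Longrightarrow> wt (2 / e) < e"
  by (auto simp: wt_def field_simps add_pos_pos)

lemma compact_open_eq: "compact_open = Metric_space.mtopology UCB DD"
proof -
  interpret DM: Metric_space UCB DD by (rule DD_metric)
  have eq: "(\<lambda>S. S \<subseteq> UCB \<and>
     (\<forall>f\<in>S. \<exists>K e. compact K \<and> e > 0 \<and>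
        {g \<in> UCB. \<forall>x\<in>K. dist (g x) (f x) < e} \<subseteq> S)) = DM.mopen"
  proof (intro ext iffI)
    fix S assume S: "S \<subseteq> UCB \<and>
     (\<forall>f\<in>S. \<exists>K e. compact K \<and> e > 0 \<and> {g \<in> UCB. \<forall>x\<in>K. dist (g x) (f x) < e} \<subseteq> S)"
    show "DM.mopen S" unfolding DM.mopen_def
    proof (intro conjI allI impI)
      show "S \<subseteq> UCB" using S by blast
      fix f assume f: "f \<in> S"
      then obtain K e where K: "compact K" "e > 0" "{g \<in> UCB. \<forall>x\<in>K. dist (g x) (f x) < e} \<subseteq> S"
        using S by blast
      obtain R where R: "\<forall>x\<in>K. norm x \<le> R" using compact_imp_bounded[OF K(1)]
        by (auto simp: bounded_iff)
      show "\<exists>r>0. DM.mball f r \<subseteq> S"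
      proof (intro exI[of _ "wt R * min 1 e"] conjI)
        show "wt R * min 1 e > 0" using wt_pos[of R] K(2) by simp
        show "DM.mball f (wt R * min 1 e) \<subseteq> S"
        proof
          fix g assume g: "g \<in> DM.mball f (wt R * min 1 e)"
          have "\<forall>x\<in>K. dist (g x) (f x) < e"
          proof
            fix x assume "x \<in> K"
            then have "\<bar>x\<bar> \<le> R" using R by auto
            then have "dist (f x) (g x) < e" using DD_small_imp[of f g R e x] g K(2) by auto
            then show "dist (g x) (f x) < e" by (simp add: dist_commute)
          qed
          then show "g \<in> S" using K(3) g by auto
        qed
      qed
    qed
  next
    fix S assume S: "DM.mopen S"
    show "S \<subseteq> UCB \<and>
     (\<forall>f\<in>S. \<exists>K e. compact K \<and> e > 0 \<and> {g \<in> UCB. \<forall>x\<in>K. dist (g x) (f x) < e} \<subseteq> S)"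
    proof (intro conjI ballI)
      show "S \<subseteq> UCB" using S unfolding DM.mopen_def by blast
      fix f assume f: "f \<in> S"
      then obtain r where r: "r > 0" "DM.mball f r \<subseteq> S" using S unfolding DM.mopen_def by blast
      have fU: "f \<in> UCB" using S f unfolding DM.mopen_def by blast
      define R where "R = 2 / (r/2)"
      have R0: "R \<ge> 0" using r by (simp add: R_def)
      have wR: "wt R < r/2" using wt_small[of "r/2"] r by (simp add: R_def)
      show "\<exists>K e. compact K \<and> e > 0 \<and> {g \<in> UCB. \<forall>x\<in>K. dist (g x) (f x) < e} \<subseteq> S"
      proof (intro exI[of _ "cball 0 R"] exI[of _ "r/2"] conjI)
        show "compact (cball (0::real) R)" by simp
        show "r/2 > 0" using r by simp
        show "{g \<in> UCB. \<forall>x\<in>cball 0 R. dist (g x) (f x) < r/2} \<subseteq> S"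
        proof
          fix g assume g: "g \<in> {g \<in> UCB. \<forall>x\<in>cball 0 R. dist (g x) (f x) < r/2}"
          have "DD f g \<le> r/2"
          proof (rule DD_small_suff[OF _ _ R0])
            fix x :: real assume "\<bar>x\<bar> \<le> R"
            then have "dist (g x) (f x) < r/2" using g by (auto simp: dist_real_def)
            then show "dist (f x) (g x) \<le> r/2" by (simp add: dist_commute)
          next
            show "wt R \<le> r/2" using wR by simp
          qed
          then have "g \<in> DM.mball f r" using g fU r by (auto simp: DM.mball_def)
          then show "g \<in> S" using r by blast
        qed
      qed
    qed
  qed
  show ?thesis unfolding compact_open_def eq DM.mtopology_def ..
qed



definition mod0 :: "(real \<Rightarrow> real) \<Rightarrow> bool" where
  "mod0 T \<longleftrightarrow> (\<forall>e>0. \<exists>d>0. \<forall>h. \<bar>h\<bar> < d \<longrightarrow> T h < e)"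

definition EE :: "(real \<Rightarrow> real) \<Rightarrow> (real \<Rightarrow> real) \<Rightarrow> (real \<Rightarrow> real \<times> real) set" where
  "EE T1 T2 = {f \<in> UCB. (\<forall>t. 0 \<le> fst (f t) \<and> fst (f t) \<le> 1 \<and> 0 \<le> snd (f t) \<and> snd (f t) \<le> 1) \<and>
     (\<forall>t h. \<bar>fst (f (t+h)) - fst (f t)\<bar> \<le> T1 h \<and> \<bar>snd (f (t+h)) - snd (f t)\<bar> \<le> T2 h)}"

lemma dist_pair_le: "dist p q \<le> \<bar>fst p - fst q\<bar> + \<bar>snd p - snd q\<bar>"
  for p q :: "real \<times> real"
  using sqrt_sum_squares_le_sum_abs[of "fst p - fst q" "snd p - snd q"]
  by (cases p; cases q) (simp add: dist_Pair_Pair dist_real_def)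

lemma mod0_add: "mod0 T1 \<Longrightarrow> mod0 T2 \<Longrightarrow> mod0 (\<lambda>h. T1 h + T2 h)"
  unfolding mod0_def
proof (intro allI impI)
  fix e :: real assume m1: "\<forall>e>0. \<exists>d>0. \<forall>h. \<bar>h\<bar> < d \<longrightarrow> T1 h < e"
    and m2: "\<forall>e>0. \<exists>d>0. \<forall>h. \<bar>h\<bar> < d \<longrightarrow> T2 h < e" and e: "0 < e"
  obtain d1 where d1: "d1 > 0" "\<forall>h. \<bar>h\<bar> < d1 \<longrightarrow> T1 h < e/2" using m1 e by (meson half_gt_zero)
  obtain d2 where d2: "d2 > 0" "\<forall>h. \<bar>h\<bar> < d2 \<longrightarrow> T2 h < e/2" using m2 e by (meson half_gt_zero)
  show "\<exists>d>0. \<forall>h. \<bar>h\<bar> < d \<longrightarrow> T1 h + T2 h < e"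
  proof (intro exI[of _ "min d1 d2"] conjI allI impI)
    show "min d1 d2 > 0" using d1 d2 by simp
    fix h :: real assume "\<bar>h\<bar> < min d1 d2"
    then show "T1 h + T2 h < e" using d1(2)[rule_format, of h] d2(2)[rule_format, of h] by simp
  qed
qed

lemma props_dist:
  fixes f :: "real \<Rightarrow> real \<times> real" and x y :: real
  assumes "\<forall>t h. \<bar>fst (f (t+h)) - fst (f t)\<bar> \<le> T1 h \<and> \<bar>snd (f (t+h)) - snd (f t)\<bar> \<le> T2 h"
  shows "dist (f y) (f x) \<le> T1 (y - x) + T2 (y - x)"
proof -
  have "y = x + (y - x)" by simp
  then have "\<bar>fst (f y) - fst (f x)\<bar> \<le> T1 (y - x) \<and> \<bar>snd (f y) - snd (f x)\<bar> \<le> T2 (y - x)"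
    using assms[rule_format, of x "y - x"] by simp
  then show ?thesis using dist_pair_le[of "f y" "f x"] by linarith
qed

lemma props_UCB:
  assumes m1: "mod0 T1" and m2: "mod0 T2"
    and b: "\<forall>t. 0 \<le> fst (f t) \<and> fst (f t) \<le> 1 \<and> 0 \<le> snd (f t) \<and> snd (f t) \<le> 1"
    and dd: "\<forall>t h. \<bar>fst (f (t+h)) - fst (f t)\<bar> \<le> T1 h \<and> \<bar>snd (f (t+h)) - snd (f t)\<bar> \<le> T2 h"
  shows "f \<in> UCB"
proof -
  have mW: "mod0 (\<lambda>h. T1 h + T2 h)" using mod0_add[OF m1 m2] .
  have "uniformly_continuous_on UNIV f"
    unfolding uniformly_continuous_on_def
  proof (intro allI impI)
    fix e :: real assume e: "e > 0"
    then obtain d where d: "d > 0" "\<forall>h. \<bar>h\<bar> < d \<longrightarrow> T1 h + T2 h < e" using mW unfolding mod0_def by blast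
    show "\<exists>d>0. \<forall>x\<in>UNIV. \<forall>x'\<in>UNIV. dist x' x < d \<longrightarrow> dist (f x') (f x) < e"
    proof (intro exI[of _ d] conjI ballI impI d(1))
      fix x x' :: real assume "dist x' x < d"
      then have "\<bar>x' - x\<bar> < d" by (simp add: dist_real_def)
      then show "dist (f x') (f x) < e" using props_dist[OF dd, of x' x] d(2) by force
    qed
  qed
  moreover have "bounded (range f)"
    unfolding bounded_iff
  proof (intro exI[of _ 2] ballI)
    fix p assume "p \<in> range f"
    then obtain t where p: "p = f t" by auto
    have "norm p = sqrt ((fst p)^2 + (snd p)^2)" by (cases p) (simp add: norm_Pair)
    also have "\<dots> \<le> \<bar>fst p\<bar> + \<bar>snd p\<bar>" by (rule sqrt_sum_squares_le_sum_abs)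
    also have "\<dots> \<le> 2" using b[rule_format, of t] p by auto
    finally show "norm p \<le> 2" .
  qed
  ultimately show ?thesis by (simp add: UCB_def)
qed

lemma EE_limit_props:
  assumes sE: "\<And>n. \<sigma> n \<in> EE T1 T2" and pw: "\<And>x. (\<lambda>n. \<sigma> n x) \<longlonglongrightarrow> l x"
  shows "(\<forall>t. 0 \<le> fst (l t) \<and> fst (l t) \<le> 1 \<and> 0 \<le> snd (l t) \<and> snd (l t) \<le> 1) \<and>
     (\<forall>t h. \<bar>fst (l (t+h)) - fst (l t)\<bar> \<le> T1 h \<and> \<bar>snd (l (t+h)) - snd (l t)\<bar> \<le> T2 h)"
proof (intro conjI allI)
  fix t
  have f: "(\<lambda>n. fst (\<sigma> n t)) \<longlonglongrightarrow> fst (l t)" using tendsto_fst[OF pw] .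
  have s: "(\<lambda>n. snd (\<sigma> n t)) \<longlonglongrightarrow> snd (l t)" using tendsto_snd[OF pw] .
  have b: "0 \<le> fst (\<sigma> n t) \<and> fst (\<sigma> n t) \<le> 1 \<and> 0 \<le> snd (\<sigma> n t) \<and> snd (\<sigma> n t) \<le> 1" for n
    using sE[of n] by (auto simp: EE_def)
  show "0 \<le> fst (l t)" using LIMSEQ_le_const[OF f] b by blast
  show "fst (l t) \<le> 1" using LIMSEQ_le_const2[OF f] b by blast
  show "0 \<le> snd (l t)" using LIMSEQ_le_const[OF s] b by blast
  show "snd (l t) \<le> 1" using LIMSEQ_le_const2[OF s] b by blast
next
  fix t h
  have f: "(\<lambda>n. \<bar>fst (\<sigma> n (t+h)) - fst (\<sigma> n t)\<bar>) \<longlonglongrightarrow> \<bar>fst (l (t+h)) - fst (l t)\<bar>"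
    by (intro tendsto_intros pw)
  have s: "(\<lambda>n. \<bar>snd (\<sigma> n (t+h)) - snd (\<sigma> n t)\<bar>) \<longlonglongrightarrow> \<bar>snd (l (t+h)) - snd (l t)\<bar>"
    by (intro tendsto_intros pw)
  have b: "\<bar>fst (\<sigma> n (t+h)) - fst (\<sigma> n t)\<bar> \<le> T1 h \<and> \<bar>snd (\<sigma> n (t+h)) - snd (\<sigma> n t)\<bar> \<le> T2 h" for n
    using sE[of n] by (auto simp: EE_def)
  show "\<bar>fst (l (t+h)) - fst (l t)\<bar> \<le> T1 h" using LIMSEQ_le_const2[OF f] b by blast
  show "\<bar>snd (l (t+h)) - snd (l t)\<bar> \<le> T2 h" using LIMSEQ_le_const2[OF s] b by blast
qed

lemma DD_lim_pointwise:
  assumes "\<forall>\<epsilon>>0. eventually (\<lambda>n. DD (\<sigma> n) l < \<epsilon>) sequentially"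
  shows "(\<lambda>n. \<sigma> n x) \<longlonglongrightarrow> l x"
proof (rule tendstoI)
  fix e :: real assume e: "e > 0"
  have "wt \<bar>x\<bar> * min 1 e > 0" using wt_pos[of "\<bar>x\<bar>"] e by simp
  then have "eventually (\<lambda>n. DD (\<sigma> n) l < wt \<bar>x\<bar> * min 1 e) sequentially" using assms by blast
  then show "eventually (\<lambda>n. dist (\<sigma> n x) (l x) < e) sequentially"
    by (rule eventually_mono) (use DD_small_imp e in auto)
qed

lemma EE_closed: "closedin (Metric_space.mtopology UCB DD) (EE T1 T2)"
proof -
  interpret DM: Metric_space UCB DD by (rule DD_metric)
  show ?thesis unfolding DM.metric_closedin_iff_sequentially_closed
  proof (intro conjI allI impI)
    show "EE T1 T2 \<subseteq> UCB" by (auto simp: EE_def)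
    fix \<sigma> l assume a: "range \<sigma> \<subseteq> EE T1 T2 \<and> limitin DM.mtopology \<sigma> l sequentially"
    then have lU: "l \<in> UCB" and ev: "\<forall>\<epsilon>>0. eventually (\<lambda>n. DD (\<sigma> n) l < \<epsilon>) sequentially"
      by (auto simp: DM.limitin_metric elim: eventually_mono)
    have sE: "\<sigma> n \<in> EE T1 T2" for n using a by auto
    show "l \<in> EE T1 T2" using lU EE_limit_props[OF sE DD_lim_pointwise[OF ev]] by (simp add: EE_def)
  qed
qed



lemma EE_compact:
  assumes m1: "mod0 T1" and m2: "mod0 T2"
  shows "compactin (Metric_space.mtopology UCB DD) (EE T1 T2)"
proof -
  interpret DM: Metric_space UCB DD by (rule DD_metric)
  define W where "W h = T1 h + T2 h" for h
  have mW: "mod0 W" using mod0_add[OF m1 m2] by (simp add: W_def[abs_def])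
  have Edist: "f \<in> EE T1 T2 \<Longrightarrow> dist (f y) (f x) \<le> W (y - x)" for f x y
    using props_dist[of f T1 T2 y x] by (auto simp: EE_def W_def)
  have Ebox: "f \<in> EE T1 T2 \<Longrightarrow> f t \<in> {0..1::real} \<times> {0..1::real}" for f t
    by (cases "f t") (auto simp: EE_def dest!: spec[of _ t])
  show ?thesis unfolding DM.compactin_sequentially
  proof (intro conjI allI impI)
    show "EE T1 T2 \<subseteq> UCB" by (auto simp: EE_def)
    fix \<sigma> :: "nat \<Rightarrow> real \<Rightarrow> real \<times> real" assume \<sigma>: "range \<sigma> \<subseteq> EE T1 T2"
    then have sE: "\<And>n. \<sigma> n \<in> EE T1 T2" by auto
    obtain m :: "real \<Rightarrow> nat" where "bij_betw m \<rat> UNIV"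
      using countable_rat Rats_infinite by (erule countableE_infinite)
    then obtain r :: "nat \<Rightarrow> real" where bij: "bij_betw r UNIV \<rat>"
      using bij_betw_inv by blast
    have dense_r: "\<And>x y. x < y \<Longrightarrow> \<exists>n. x < r n \<and> r n < y"
      by (metis Rats_dense_in_real bij f_the_inv_into_f bij_betw_def)
    let ?P = "\<lambda>n s. convergent (\<lambda>k. \<sigma> (s k) (r n))"
    interpret nat: subseqs ?P
    proof (unfold subseqs_def, intro allI impI)
      fix n :: nat and s :: "nat \<Rightarrow> nat" assume s: "strict_mono s"
      have cpt: "compact ({0..1::real} \<times> {0..1::real})" by (intro compact_Times) auto
      have mem: "\<forall>k. \<sigma> (s k) (r n) \<in> {0..1::real} \<times> {0..1::real}" using Ebox sE by blast
      obtain l s' where "l \<in> {0..1::real} \<times> {0..1::real}" "strict_mono s'" "((\<lambda>k. \<sigma> (s k) (r n)) \<circ> s') \<longlonglongrightarrow> l"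
        by (rule seq_compactE[OF compact_imp_seq_compact[OF cpt] mem])
      then have "strict_mono s' \<and> convergent (\<lambda>k. \<sigma> ((s \<circ> s') k) (r n))"
        unfolding convergent_def comp_def by blast
      then show "\<exists>s'. strict_mono s' \<and> convergent (\<lambda>k. \<sigma> ((s \<circ> s') k) (r n))" by blast
    qed
    define d where "d = nat.diagseq"
    have subseq: "strict_mono d"
      unfolding d_def using nat.subseq_diagseq by auto
    have rat_cnv: "?P n d" for n
    proof -
      have Pn_seqseq: "?P n (nat.seqseq (Suc n))"
        by (rule nat.seqseq_holds)
      have 1: "(\<lambda>k. \<sigma> ((nat.seqseq (Suc n) \<circ> (\<lambda>k. nat.fold_reduce (Suc n) k
        (Suc n + k))) k) (r n)) = (\<lambda>k. \<sigma> (nat.seqseq (Suc n) k) (r n)) \<circ>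
        (\<lambda>k. nat.fold_reduce (Suc n) k (Suc n + k))"
        by auto
      have 2: "?P n (d \<circ> ((+) (Suc n)))"
        unfolding d_def nat.diagseq_seqseq 1
        by (intro convergent_subseq_convergent Pn_seqseq nat.subseq_diagonal_rest)
      then obtain L where 3: "(\<lambda>na. \<sigma> (d (na + Suc n)) (r n)) \<longlonglongrightarrow> L"
        by (auto simp: add.commute dest: convergentD)
      then have "(\<lambda>k. \<sigma> (d k) (r n)) \<longlonglongrightarrow> L"
        by (rule LIMSEQ_offset)
      then show ?thesis
        unfolding convergent_def by blast
    qed
    define g where "g k = \<sigma> (d k)" for k
    have gE: "g k \<in> EE T1 T2" for k using sE by (simp add: g_def)
    have cauchy: "Cauchy (\<lambda>k. g k x)" for x
      unfolding Cauchy_def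
    proof (intro allI impI)
      fix e :: real assume e: "e > 0"
      have e3: "e/3 > 0" using e by simp
      obtain \<delta> where \<delta>: "\<delta> > 0" "\<forall>h. \<bar>h\<bar> < \<delta> \<longrightarrow> W h < e/3"
        using mW e3 unfolding mod0_def by blast
      obtain n where n: "x - \<delta> < r n" "r n < x + \<delta>" using dense_r[of "x - \<delta>" "x + \<delta>"] \<delta>(1) by auto
      have "\<bar>x - r n\<bar> < \<delta>" using n by linarith
      then have xq: "W (x - r n) < e/3" using \<delta>(2) by blast
      have "Cauchy (\<lambda>k. g k (r n))" using rat_cnv[of n] convergent_Cauchy by (simp add: g_def)
      then obtain M where M: "\<forall>m\<ge>M. \<forall>k\<ge>M. dist (g m (r n)) (g k (r n)) < e/3"
        unfolding Cauchy_def using e3 by blast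
      show "\<exists>M. \<forall>m\<ge>M. \<forall>k\<ge>M. dist (g m x) (g k x) < e"
      proof (intro exI[of _ M] allI impI)
        fix m k assume mk: "M \<le> m" "M \<le> k"
        have t1: "dist (g m x) (g k x) \<le> dist (g m x) (g m (r n)) + dist (g m (r n)) (g k x)"
          by (rule dist_triangle)
        have t2: "dist (g m (r n)) (g k x) \<le> dist (g m (r n)) (g k (r n)) + dist (g k (r n)) (g k x)"
          by (rule dist_triangle)
        moreover have "dist (g m x) (g m (r n)) \<le> W (x - r n)" using Edist[OF gE] .
        moreover have "dist (g k (r n)) (g k x) \<le> W (x - r n)" using Edist[OF gE, of k x "r n"] by (simp add: dist_commute)
        moreover have "dist (g m (r n)) (g k (r n)) < e/3" using M mk by blast
        ultimately show "dist (g m x) (g k x) < e" using t1 t2 xq by linarith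
      qed
    qed
    define l where "l x = lim (\<lambda>k. g k x)" for x
    have lim: "(\<lambda>k. g k x) \<longlonglongrightarrow> l x" for x
      using cauchy[of x] unfolding l_def by (simp add: Cauchy_convergent_iff convergent_LIMSEQ_iff)
    have lp: "(\<forall>t. 0 \<le> fst (l t) \<and> fst (l t) \<le> 1 \<and> 0 \<le> snd (l t) \<and> snd (l t) \<le> 1) \<and>
     (\<forall>t h. \<bar>fst (l (t+h)) - fst (l t)\<bar> \<le> T1 h \<and> \<bar>snd (l (t+h)) - snd (l t)\<bar> \<le> T2 h)"
      by (rule EE_limit_props[OF gE lim])
    have lE: "l \<in> EE T1 T2" using lp props_UCB[OF m1 m2, of l] by (simp add: EE_def)
    have lim_DD: "limitin DM.mtopology (\<sigma> \<circ> d) l sequentially"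
      unfolding DM.limitin_metric
    proof (intro conjI allI impI)
      show "l \<in> UCB" using lE by (simp add: EE_def)
      fix \<epsilon> :: real assume \<epsilon>: "\<epsilon> > 0"
      define R where "R = 2 / (\<epsilon>/2)"
      have R0: "R \<ge> 0" using \<epsilon> by (simp add: R_def)
      have wR: "wt R \<le> \<epsilon>/2" using wt_small[of "\<epsilon>/2"] \<epsilon> by (simp add: R_def)
      have e6: "\<epsilon>/6 > 0" using \<epsilon> by simp
      obtain \<delta> where \<delta>: "\<delta> > 0" "\<forall>h. \<bar>h\<bar> < \<delta> \<longrightarrow> W h < \<epsilon>/6"
        using mW e6 unfolding mod0_def by blast
      have cov: "cball 0 R \<subseteq> (\<Union>y\<in>cball 0 R. ball y \<delta>)" using \<delta>(1) by force
      obtain F :: "real set" where F: "F \<subseteq> cball 0 R" "finite F" "cball 0 R \<subseteq> (\<Union>y\<in>F. ball y \<delta>)"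
        using compactE_image[OF compact_cball _ cov] by blast
      have ev: "eventually (\<lambda>k. \<forall>y\<in>F. dist (g k y) (l y) < \<epsilon>/6) sequentially"
        using \<epsilon> by (intro eventually_ball_finite[OF F(2)] ballI tendstoD[OF lim]) simp
      show "eventually (\<lambda>k. (\<sigma> \<circ> d) k \<in> UCB \<and> DD ((\<sigma> \<circ> d) k) l < \<epsilon>) sequentially"
      proof (rule eventually_mono[OF ev], intro conjI)
        fix k assume k: "\<forall>y\<in>F. dist (g k y) (l y) < \<epsilon>/6"
        show "(\<sigma> \<circ> d) k \<in> UCB" using gE[of k] by (auto simp: EE_def g_def)
        have "DD (g k) l \<le> \<epsilon>/2"
        proof (rule DD_small_suff[OF _ wR R0])
          fix x :: real assume x: "\<bar>x\<bar> \<le> R"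
          then have "x \<in> cball 0 R" by simp
          then obtain y where y: "y \<in> F" "dist y x < \<delta>" using F(3) by auto
          have Wxy: "W (x - y) < \<epsilon>/6" using \<delta>(2) y(2) by (simp add: dist_real_def)
          have t1: "dist (g k x) (l x) \<le> dist (g k x) (g k y) + dist (g k y) (l x)"
            by (rule dist_triangle)
          have t2: "dist (g k y) (l x) \<le> dist (g k y) (l y) + dist (l y) (l x)"
            by (rule dist_triangle)
          moreover have "dist (g k x) (g k y) \<le> W (x - y)" using Edist[OF gE] .
          moreover have "dist (l y) (l x) \<le> W (x - y)" using Edist[OF lE, of x y] by (simp add: dist_commute)
          moreover have "dist (g k y) (l y) < \<epsilon>/6" using k y(1) by blast
          ultimately show "dist (g k x) (l x) \<le> \<epsilon>/2" using Wxy t1 t2 by linarith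
        qed
        then show "DD ((\<sigma> \<circ> d) k) l < \<epsilon>" using \<epsilon> by (simp add: g_def)
      qed
    qed
    show "\<exists>l r. l \<in> EE T1 T2 \<and> strict_mono r \<and> limitin DM.mtopology (\<sigma> \<circ> r) l sequentially"
      using lE subseq lim_DD by blast
  qed
qed



lemma key_ineq:
  fixes x y r :: real
  assumes "0 \<le> x" "x \<le> y" "y \<le> 1" "0 < r" "r < 1"
  shows "(1 - y) * exp (r * (y - x)) \<le> 1 - x"
proof -
  define \<delta> where "\<delta> = y - x"
  have d0: "0 \<le> \<delta>" "\<delta> \<le> 1" using assms by (auto simp: \<delta>_def)
  have e1: "exp (r * \<delta>) \<le> exp \<delta>" using d0 assms by (simp add: mult_left_le_one_le)
  have e2: "(1 - \<delta>) * exp \<delta> \<le> 1"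
  proof -
    have "1 - \<delta> \<le> exp (- \<delta>)" using exp_ge_add_one_self[of "-\<delta>"] by simp
    then have "(1 - \<delta>) * exp \<delta> \<le> exp (- \<delta>) * exp \<delta>" by (intro mult_right_mono) auto
    then show ?thesis by (simp add: exp_minus)
  qed
  have ge1: "exp \<delta> \<ge> 1" using d0 by simp
  have "(1 - y) * exp (r * \<delta>) \<le> (1 - y) * exp \<delta>" using e1 assms by (intro mult_left_mono) auto
  also have "\<dots> = (1 - y) + (1 - y) * (exp \<delta> - 1)" by (simp add: algebra_simps)
  also have "\<dots> \<le> (1 - y) + (1 - \<delta>) * (exp \<delta> - 1)"
    using ge1 assms by (intro add_left_mono mult_right_mono) (auto simp: \<delta>_def)
  also have "\<dots> \<le> 1 - x" using e2 by (simp add: algebra_simps \<delta>_def)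
  finally show ?thesis by (simp add: \<delta>_def)
qed

definition G1 :: "real \<Rightarrow> real \<Rightarrow> real \<times> real \<Rightarrow> real" where
  "G1 r1 a1 p = (1 - fst p) * exp (r1 * (fst p - a1 * snd p))"
definition G2 :: "real \<Rightarrow> real \<Rightarrow> real \<times> real \<Rightarrow> real" where
  "G2 r2 a2 p = snd p * exp (r2 * (1 - a2 - snd p + a2 * fst p))"

definition inbox :: "real \<times> real \<Rightarrow> bool" where
  "inbox p \<longleftrightarrow> 0 \<le> fst p \<and> fst p \<le> 1 \<and> 0 \<le> snd p \<and> snd p \<le> 1"

lemma G1_mono:
  assumes r: "0 < r1" "r1 < 1" and a: "1 < a1" and p: "inbox p" and q: "inbox q"
    and pq: "fst p \<le> fst q" "snd p \<le> snd q"
  shows "G1 r1 a1 q \<le> G1 r1 a1 p"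
proof -
  have s1: "(1 - fst q) * exp (r1 * (fst q - fst p)) \<le> 1 - fst p"
    using key_ineq[of "fst p" "fst q" r1] p q pq r by (auto simp: inbox_def)
  have eq: "G1 r1 a1 z = (1 - fst z) * exp (r1 * fst z) * exp (- (r1 * a1 * snd z))" for z
  proof -
    have "r1 * (fst z - a1 * snd z) = r1 * fst z + - (r1 * a1 * snd z)" by (simp add: algebra_simps)
    then show ?thesis unfolding G1_def by (simp only: exp_add mult.assoc)
  qed
  have "(1 - fst q) * exp (r1 * fst q) = (1 - fst q) * exp (r1 * (fst q - fst p)) * exp (r1 * fst p)"
    by (simp add: algebra_simps exp_add[symmetric])
  also have "\<dots> \<le> (1 - fst p) * exp (r1 * fst p)" using s1 by (intro mult_right_mono) auto
  finally have A: "(1 - fst q) * exp (r1 * fst q) \<le> (1 - fst p) * exp (r1 * fst p)" .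
  have B: "exp (- (r1 * a1 * snd q)) \<le> exp (- (r1 * a1 * snd p))"
    using pq r a by (simp add: mult_left_mono)
  have C: "0 \<le> (1 - fst q) * exp (r1 * fst q)" using q by (auto simp: inbox_def)
  have "G1 r1 a1 q \<le> (1 - fst q) * exp (r1 * fst q) * exp (- (r1 * a1 * snd p))"
    unfolding eq using B C by (intro mult_left_mono) auto
  also have "\<dots> \<le> G1 r1 a1 p" unfolding eq using A by (intro mult_right_mono) auto
  finally show ?thesis .
qed

lemma G2_mono:
  assumes r: "0 < r2" "r2 < 1" and a: "1 < a2" and p: "inbox p" and q: "inbox q"
    and pq: "fst p \<le> fst q" "snd p \<le> snd q"
  shows "G2 r2 a2 p \<le> G2 r2 a2 q"
proof -
  have s1: "(1 - (1 - snd p)) * exp (r2 * ((1 - snd p) - (1 - snd q))) \<le> 1 - (1 - snd q)"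
    using key_ineq[of "1 - snd q" "1 - snd p" r2] p q pq r by (auto simp: inbox_def)
  then have s1': "snd p * exp (r2 * (snd q - snd p)) \<le> snd q" by simp
  have eq: "G2 r2 a2 z = snd z * exp (- (r2 * snd z)) * exp (r2 * (1 - a2 + a2 * fst z))" for z
  proof -
    have "r2 * (1 - a2 - snd z + a2 * fst z) = - (r2 * snd z) + r2 * (1 - a2 + a2 * fst z)" by (simp add: algebra_simps)
    then show ?thesis unfolding G2_def by (simp only: exp_add mult.assoc)
  qed
  have "snd p * exp (- (r2 * snd p)) = snd p * exp (r2 * (snd q - snd p)) * exp (- (r2 * snd q))"
    by (simp add: algebra_simps exp_add[symmetric])
  also have "\<dots> \<le> snd q * exp (- (r2 * snd q))" using s1' by (intro mult_right_mono) auto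
  finally have A: "snd p * exp (- (r2 * snd p)) \<le> snd q * exp (- (r2 * snd q))" .
  have B: "exp (r2 * (1 - a2 + a2 * fst p)) \<le> exp (r2 * (1 - a2 + a2 * fst q))"
    using pq r a by (simp add: mult_left_mono)
  have C: "0 \<le> snd p * exp (- (r2 * snd p))" using p by (auto simp: inbox_def)
  have "G2 r2 a2 p \<le> snd p * exp (- (r2 * snd p)) * exp (r2 * (1 - a2 + a2 * fst q))"
    unfolding eq using B C by (intro mult_left_mono) auto
  also have "\<dots> \<le> G2 r2 a2 q" unfolding eq using A by (intro mult_right_mono) auto
  finally show ?thesis .
qed

lemma G1_bounds:
  assumes r: "0 < r1" "r1 < 1" and a: "1 < a1" and p: "inbox p"
  shows "0 \<le> G1 r1 a1 p \<and> G1 r1 a1 p \<le> 1"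
proof
  show "0 \<le> G1 r1 a1 p" using p by (auto simp: G1_def inbox_def)
  have "G1 r1 a1 p \<le> G1 r1 a1 (0, 0)" using G1_mono[OF r a, of "(0,0)" p] p by (auto simp: inbox_def)
  then show "G1 r1 a1 p \<le> 1" by (simp add: G1_def)
qed

lemma G2_bounds:
  assumes r: "0 < r2" "r2 < 1" and a: "1 < a2" and p: "inbox p"
  shows "0 \<le> G2 r2 a2 p \<and> G2 r2 a2 p \<le> 1"
proof
  show "0 \<le> G2 r2 a2 p" using p by (auto simp: G2_def inbox_def)
  have "G2 r2 a2 p \<le> G2 r2 a2 (1, 1)" using G2_mono[OF r a p, of "(1,1)"] p by (auto simp: inbox_def)
  then show "G2 r2 a2 p \<le> 1" by (simp add: G2_def)
qed

lemma G1_cont: "continuous_on UNIV (G1 r1 a1)"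
  unfolding G1_def by (intro continuous_intros)
lemma G2_cont: "continuous_on UNIV (G2 r2 a2)"
  unfolding G2_def by (intro continuous_intros)



definition conv :: "(real \<Rightarrow> real) \<Rightarrow> (real \<Rightarrow> real) \<Rightarrow> real \<Rightarrow> real" where
  "conv g l t = (LINT y|lebesgue. g y * l (t - y))"

lemma kernelD:
  assumes "kernel l"
  shows "integrable lebesgue l" "(LINT y|lebesgue. l y) = 1" "\<And>y. 0 \<le> l y"
  using assms by (auto simp: kernel_def)

lemma kernel_refl_meas:
  assumes k: "kernel l" shows "(\<lambda>y. l (t - y)) \<in> borel_measurable lebesgue"
  using integrable_reflect[OF kernelD(1)[OF k], of t] by (rule borel_measurable_integrable)

lemma conv_integrable:
  assumes k: "kernel l" and g: "g \<in> borel_measurable lebesgue" and b: "\<And>y. \<bar>g y\<bar> \<le> M"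
  shows "integrable lebesgue (\<lambda>y. g y * l (t - y))"
proof -
  have i: "integrable lebesgue (\<lambda>y. M * l (t - y))"
    using integrable_reflect[OF kernelD(1)[OF k], of t] by simp
  have m: "(\<lambda>y. g y * l (t - y)) \<in> borel_measurable lebesgue"
    using g kernel_refl_meas[OF k, of t] by measurable
  have ae: "AE y in lebesgue. norm (g y * l (t - y)) \<le> norm (M * l (t - y))"
  proof (rule AE_I2)
    fix y :: real
    have "\<bar>g y\<bar> * \<bar>l (t - y)\<bar> \<le> \<bar>M\<bar> * \<bar>l (t - y)\<bar>"
      using b[of y] by (intro mult_right_mono) auto
    then show "norm (g y * l (t - y)) \<le> norm (M * l (t - y))" by (simp add: abs_mult)
  qed
  show ?thesis by (rule Bochner_Integration.integrable_bound[OF i m ae])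
qed

lemma conv_mono:
  assumes k: "kernel l" and g: "g \<in> borel_measurable lebesgue" "\<And>y. \<bar>g y\<bar> \<le> 1"
    and g': "g' \<in> borel_measurable lebesgue" "\<And>y. \<bar>g' y\<bar> \<le> 1"
    and le: "\<And>y. g y \<le> g' y"
  shows "conv g l t \<le> conv g' l t"
  unfolding conv_def
  by (rule integral_mono[OF conv_integrable[OF k g] conv_integrable[OF k g']])
     (use le kernelD(3)[OF k] in \<open>auto intro: mult_right_mono\<close>)

lemma conv_bounds:
  assumes k: "kernel l" and g: "g \<in> borel_measurable lebesgue" and b: "\<And>y. 0 \<le> g y \<and> g y \<le> 1"
  shows "0 \<le> conv g l t \<and> conv g l t \<le> 1"
proof
  show "0 \<le> conv g l t" unfolding conv_def
    by (intro Bochner_Integration.integral_nonneg) (use b kernelD(3)[OF k] in auto)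
  have b': "\<And>y. \<bar>g y\<bar> \<le> 1" using b by (simp add: abs_le_iff)
  have "conv g l t \<le> (LINT y|lebesgue. l (t - y))"
    unfolding conv_def
    by (rule integral_mono[OF conv_integrable[OF k g b'] integrable_reflect[OF kernelD(1)[OF k]]])
       (use b kernelD(3)[OF k] in \<open>auto intro: mult_left_le_one_le\<close>)
  also have "\<dots> = 1" using int_reflect[of l t] kernelD(2)[OF k] by simp
  finally show "conv g l t \<le> 1" .
qed

lemma conv_shift:
  assumes k: "kernel l" and g: "g \<in> borel_measurable lebesgue" and b: "\<And>y. \<bar>g y\<bar> \<le> 1"
  shows "\<bar>conv g l (t + h) - conv g l t\<bar> \<le> (LINT s|lebesgue. \<bar>l (s + h) - l s\<bar>)"
proof -
  have i1: "integrable lebesgue (\<lambda>y. g y * l (t + h - y))" by (rule conv_integrable[OF k g b])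
  have i2: "integrable lebesgue (\<lambda>y. g y * l (t - y))" by (rule conv_integrable[OF k g b])
  have i3: "integrable lebesgue (\<lambda>y. \<bar>l (t - y + h) - l (t - y)\<bar>)"
    using integrable_reflect[OF integrable_shift_diff[OF kernelD(1)[OF k], of h], of t] by simp
  have "conv g l (t + h) - conv g l t = (LINT y|lebesgue. g y * l (t + h - y) - g y * l (t - y))"
    unfolding conv_def using i1 i2 by simp
  then have "\<bar>conv g l (t + h) - conv g l t\<bar> \<le> (LINT y|lebesgue. \<bar>g y * l (t + h - y) - g y * l (t - y)\<bar>)"
    by (simp add: integral_abs_bound)
  also have "\<dots> \<le> (LINT y|lebesgue. \<bar>l (t - y + h) - l (t - y)\<bar>)"
  proof (rule integral_mono[OF _ i3])
    show "integrable lebesgue (\<lambda>y. \<bar>g y * l (t + h - y) - g y * l (t - y)\<bar>)" using i1 i2 by simp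
    fix y :: real
    have "\<bar>g y * l (t + h - y) - g y * l (t - y)\<bar> = \<bar>g y\<bar> * \<bar>l (t - y + h) - l (t - y)\<bar>"
      by (simp add: abs_mult[symmetric] algebra_simps)
    also have "\<dots> \<le> \<bar>l (t - y + h) - l (t - y)\<bar>" using b[of y] by (intro mult_left_le_one_le) auto
    finally show "\<bar>g y * l (t + h - y) - g y * l (t - y)\<bar> \<le> \<bar>l (t - y + h) - l (t - y)\<bar>" .
  qed
  also have "\<dots> = (LINT s|lebesgue. \<bar>l (s + h) - l s\<bar>)"
    using int_reflect[of "\<lambda>s. \<bar>l (s + h) - l s\<bar>" t] by simp
  finally show ?thesis .
qed

lemma conv_diff:
  assumes k: "kernel l" and g: "g \<in> borel_measurable lebesgue" "\<And>y. \<bar>g y\<bar> \<le> 1"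
    and g': "g' \<in> borel_measurable lebesgue" "\<And>y. \<bar>g' y\<bar> \<le> 1"
  shows "\<bar>conv g l t - conv g' l t\<bar> \<le> (LINT y|lebesgue. \<bar>g y - g' y\<bar> * l (t - y))"
proof -
  have i1: "integrable lebesgue (\<lambda>y. g y * l (t - y))" by (rule conv_integrable[OF k g])
  have i2: "integrable lebesgue (\<lambda>y. g' y * l (t - y))" by (rule conv_integrable[OF k g'])
  have "conv g l t - conv g' l t = (LINT y|lebesgue. g y * l (t - y) - g' y * l (t - y))"
    unfolding conv_def using i1 i2 by simp
  then have "\<bar>conv g l t - conv g' l t\<bar> \<le> (LINT y|lebesgue. \<bar>g y * l (t - y) - g' y * l (t - y)\<bar>)"
    by (simp add: integral_abs_bound)
  also have "\<dots> = (LINT y|lebesgue. \<bar>g y - g' y\<bar> * l (t - y))"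
    using kernelD(3)[OF k] by (intro Bochner_Integration.integral_cong) (auto simp: abs_mult left_diff_distrib[symmetric])
  finally show ?thesis .
qed

lemma kernel_tail:
  assumes k: "kernel l" and e: "e > 0"
  shows "\<exists>S\<ge>0. (LINT s|lebesgue. indicator {s. S < \<bar>s\<bar>} s * l s) < e"
proof -
  have om: "{s::real. c < \<bar>s\<bar>} \<in> sets lebesgue" for c
  proof -
    have "open {s::real. c < \<bar>s\<bar>}" by (intro open_Collect_less continuous_intros)
    then show ?thesis by simp
  qed
  have lm: "l \<in> borel_measurable lebesgue" using kernelD(1)[OF k] by (rule borel_measurable_integrable)
  have c1: "(\<lambda>x. 0::real) \<in> borel_measurable lebesgue" by simp
  have c2: "\<And>n. (\<lambda>s. indicator {s. real n < \<bar>s\<bar>} s * l s) \<in> borel_measurable lebesgue"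
    using lm om by (intro borel_measurable_times borel_measurable_indicator) auto
  have c3: "integrable lebesgue (\<lambda>s. \<bar>l s\<bar>)" using kernelD(1)[OF k] by simp
  have c4: "AE s in lebesgue. (\<lambda>n. indicator {s. real n < \<bar>s\<bar>} s * l s) \<longlonglongrightarrow> (0::real)"
  proof (rule AE_I2)
    fix s :: real
    obtain N :: nat where N: "\<bar>s\<bar> \<le> real N" using real_arch_simple by blast
    have "eventually (\<lambda>n. indicator {s. real n < \<bar>s\<bar>} s * l s = (0::real)) sequentially"
      unfolding eventually_sequentially
      by (intro exI[of _ N] allI impI) (use N in \<open>auto simp: indicator_def\<close>)
    then show "(\<lambda>n. indicator {s. real n < \<bar>s\<bar>} s * l s) \<longlonglongrightarrow> (0::real)"
      by (rule tendsto_eventually)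
  qed
  have c5: "\<And>n. AE s in lebesgue. norm (indicator {s. real n < \<bar>s\<bar>} s * l s) \<le> \<bar>l s\<bar>"
    by (intro AE_I2) (auto simp: indicator_def)
  have conv0: "(\<lambda>n. LINT s|lebesgue. indicator {s. real n < \<bar>s\<bar>} s * l s) \<longlonglongrightarrow> 0"
    using integral_dominated_convergence[OF c1 c2 c3 c4 c5] by simp
  then obtain n where "dist (LINT s|lebesgue. indicator {s. real n < \<bar>s\<bar>} s * l s) 0 < e"
    using e unfolding LIMSEQ_def by blast
  then show ?thesis by (intro exI[of _ "real n"]) (auto simp: dist_real_def)
qed



lemma C01_inbox: "U \<in> C01 \<Longrightarrow> inbox (U y)"
  by (auto simp: C01_def inbox_def)

lemma C01_cont: "U \<in> C01 \<Longrightarrow> continuous_on UNIV U"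
  by (auto simp: C01_def UCB_def intro: uniformly_continuous_imp_continuous)

lemma comp_meas:
  assumes "U \<in> C01" "continuous_on UNIV G"
  shows "(\<lambda>y. G (U y)) \<in> borel_measurable lebesgue"
proof -
  have "continuous_on UNIV (\<lambda>y. G (U y))"
    using continuous_on_compose2[OF assms(2) C01_cont[OF assms(1)]] by simp
  then have "(\<lambda>y. G (U y)) \<in> borel_measurable (lebesgue_on UNIV)"
    by (rule continuous_imp_measurable_on_sets_lebesgue) simp
  then show ?thesis by (simp add: lebesgue_on_UNIV_eq)
qed

lemma cont_est:
  assumes k: "kernel l" and Gc: "continuous_on UNIV G"
    and Gb: "\<And>p. inbox p \<Longrightarrow> 0 \<le> G p \<and> G p \<le> 1" and e: "e > 0"
  shows "\<exists>S\<ge>0. \<exists>\<eta>>0. \<forall>U\<in>C01. \<forall>V\<in>C01. \<forall>t. (\<forall>y. \<bar>y\<bar> \<le> \<bar>t\<bar> + S \<longrightarrow> dist (U y) (V y) < \<eta>) \<longrightarrow>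
     \<bar>conv (\<lambda>y. G (U y)) l t - conv (\<lambda>y. G (V y)) l t\<bar> \<le> e"
proof -
  define B where "B = {0..1::real} \<times> {0..1::real}"
  have cB: "compact B" unfolding B_def by (intro compact_Times) auto
  have uc: "uniformly_continuous_on B G"
    by (rule compact_uniformly_continuous[OF continuous_on_subset[OF Gc] cB]) simp
  have e2: "e/2 > 0" using e by simp
  obtain \<eta> where \<eta>: "\<eta> > 0" "\<forall>p\<in>B. \<forall>q\<in>B. dist q p < \<eta> \<longrightarrow> dist (G q) (G p) < e/2"
    using uc e2 unfolding uniformly_continuous_on_def by blast
  obtain S where S: "S \<ge> 0" "(LINT s|lebesgue. indicator {s. S < \<bar>s\<bar>} s * l s) < e/2"
    using kernel_tail[OF k e2] by blast
  have inB: "inbox p \<Longrightarrow> p \<in> B" for p by (cases p) (auto simp: inbox_def B_def)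
  have om: "{s::real. S < \<bar>s\<bar>} \<in> sets lebesgue"
  proof -
    have "open {s::real. S < \<bar>s\<bar>}" by (intro open_Collect_less continuous_intros)
    then show ?thesis by simp
  qed
  have itail: "integrable lebesgue (\<lambda>s. indicator {s. S < \<bar>s\<bar>} s * l s)"
    using integrable_real_mult_indicator[OF om kernelD(1)[OF k]] by (simp add: mult.commute)
  show ?thesis
  proof (rule exI[of _ S], rule conjI[OF S(1)], rule exI[of _ \<eta>], rule conjI[OF \<eta>(1)], intro ballI allI impI)
    fix U V t assume U: "U \<in> C01" and V: "V \<in> C01"
      and near: "\<forall>y. \<bar>y\<bar> \<le> \<bar>t\<bar> + S \<longrightarrow> dist (U y) (V y) < \<eta>"
    have gU: "(\<lambda>y. G (U y)) \<in> borel_measurable lebesgue" by (rule comp_meas[OF U Gc])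
    have gV: "(\<lambda>y. G (V y)) \<in> borel_measurable lebesgue" by (rule comp_meas[OF V Gc])
    have bU: "\<bar>G (U y)\<bar> \<le> 1" for y using Gb[OF C01_inbox[OF U]] by auto
    have bV: "\<bar>G (V y)\<bar> \<le> 1" for y using Gb[OF C01_inbox[OF V]] by auto
    define F where "F y = e/2 * l (t - y) + indicator {s. S < \<bar>s\<bar>} (t - y) * l (t - y)" for y
    have iF: "integrable lebesgue F"
      unfolding F_def
      using integrable_reflect[OF kernelD(1)[OF k], of t] integrable_reflect[OF itail, of t] by simp
    have intF: "(LINT y|lebesgue. F y) = e/2 * 1 + (LINT s|lebesgue. indicator {s. S < \<bar>s\<bar>} s * l s)"
      unfolding F_def
      using integrable_reflect[OF kernelD(1)[OF k], of t] integrable_reflect[OF itail, of t]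
        int_reflect[of l t] int_reflect[of "\<lambda>s. indicator {s. S < \<bar>s\<bar>} s * l s" t] kernelD(2)[OF k]
      by simp
    have pt: "\<bar>G (U y) - G (V y)\<bar> * l (t - y) \<le> F y" for y
    proof -
      have "\<bar>G (U y) - G (V y)\<bar> \<le> e/2 + indicator {s. S < \<bar>s\<bar>} (t - y)"
      proof (cases "\<bar>y\<bar> \<le> \<bar>t\<bar> + S")
        case True
        then have "dist (U y) (V y) < \<eta>" using near by blast
        then have "dist (G (V y)) (G (U y)) < e/2"
          using \<eta>(2) inB[OF C01_inbox[OF U]] inB[OF C01_inbox[OF V]] by (simp add: dist_commute)
        then have "\<bar>G (U y) - G (V y)\<bar> < e/2" by (simp add: dist_real_def abs_minus_commute)
        moreover have "0 \<le> (indicator {s. S < \<bar>s\<bar>} (t - y) :: real)" by simp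
        ultimately show ?thesis by linarith
      next
        case False
        then have "S < \<bar>t - y\<bar>" by linarith
        moreover have "\<bar>G (U y) - G (V y)\<bar> \<le> 1"
          using Gb[OF C01_inbox[OF U, of y]] Gb[OF C01_inbox[OF V, of y]] by (simp add: abs_le_iff)
        ultimately show ?thesis using e by (simp add: indicator_def)
      qed
      then have "\<bar>G (U y) - G (V y)\<bar> * l (t - y) \<le> (e/2 + indicator {s. S < \<bar>s\<bar>} (t - y)) * l (t - y)"
        using kernelD(3)[OF k] by (intro mult_right_mono) auto
      then show ?thesis by (simp add: F_def algebra_simps)
    qed
    have "\<bar>conv (\<lambda>y. G (U y)) l t - conv (\<lambda>y. G (V y)) l t\<bar> \<le> (LINT y|lebesgue. \<bar>G (U y) - G (V y)\<bar> * l (t - y))"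
      by (rule conv_diff[OF k gU bU gV bV])
    also have "\<dots> \<le> (LINT y|lebesgue. F y)"
    proof (rule integral_mono'[OF iF])
      fix y :: real
      show "\<bar>G (U y) - G (V y)\<bar> * l (t - y) \<le> F y" by (rule pt)
      have "0 \<le> \<bar>G (U y) - G (V y)\<bar> * l (t - y)" using kernelD(3)[OF k] by simp
      then show "0 \<le> F y" using pt[of y] by linarith
    qed
    also have "\<dots> \<le> e" using intF S(2) by simp
    finally show "\<bar>conv (\<lambda>y. G (U y)) l t - conv (\<lambda>y. G (V y)) l t\<bar> \<le> e" .
  qed
qed



theorem lemma3:
  fixes r1 r2 a1 a2 :: real and l1 l2 :: "real \<Rightarrow> real"
  assumes "0 < r1" "r1 < 1" "0 < r2" "r2 < 1" "1 < a1" "1 < a2"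
    and "kernel l1" "kernel l2"
  defines "Q \<equiv> Qmap r1 r2 a1 a2 l1 l2"
  shows "Q ` C01 \<subseteq> C01 \<and>
         continuous_map (subtopology compact_open C01) (subtopology compact_open C01) Q \<and>
         (\<forall>\<Phi>\<in>C01. \<forall>\<Psi>\<in>C01. fle \<Psi> \<Phi> \<longrightarrow> fle (Q \<Psi>) (Q \<Phi>)) \<and>
         compactin compact_open (compact_open closure_of (Q ` C01))"
proof -
  note r1 = assms(1,2) and r2 = assms(3,4) and a1 = assms(5) and a2 = assms(6)
    and k1 = assms(7) and k2 = assms(8)
  interpret DM: Metric_space UCB DD by (rule DD_metric)
  define g1 where "g1 U = (\<lambda>y. G1 r1 a1 (U y))" for U :: "real \<Rightarrow> real \<times> real"
  define g2 where "g2 U = (\<lambda>y. G2 r2 a2 (U y))" for U :: "real \<Rightarrow> real \<times> real"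
  have Qeq: "Q U = (\<lambda>t. (1 - conv (g1 U) l1 t, conv (g2 U) l2 t))" for U
    by (simp add: Q_def Qmap_def conv_def G1_def G2_def g1_def g2_def)
  have g1m: "g1 U \<in> borel_measurable lebesgue" if "U \<in> C01" for U
    unfolding g1_def by (rule comp_meas[OF that G1_cont])
  have g2m: "g2 U \<in> borel_measurable lebesgue" if "U \<in> C01" for U
    unfolding g2_def by (rule comp_meas[OF that G2_cont])
  have g1b: "\<And>y. 0 \<le> g1 U y \<and> g1 U y \<le> 1" if "U \<in> C01" for U
    unfolding g1_def using G1_bounds[OF r1 a1 C01_inbox[OF that]] by blast
  have g2b: "\<And>y. 0 \<le> g2 U y \<and> g2 U y \<le> 1" if "U \<in> C01" for U
    unfolding g2_def using G2_bounds[OF r2 a2 C01_inbox[OF that]] by blast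
  have g1b': "\<And>y. \<bar>g1 U y\<bar> \<le> 1" if "U \<in> C01" for U
    using g1b[OF that] by (simp add: abs_le_iff)
  have g2b': "\<And>y. \<bar>g2 U y\<bar> \<le> 1" if "U \<in> C01" for U
    using g2b[OF that] by (simp add: abs_le_iff)
  define T1 where "T1 h = (LINT s|lebesgue. \<bar>l1 (s + h) - l1 s\<bar>)" for h
  define T2 where "T2 h = (LINT s|lebesgue. \<bar>l2 (s + h) - l2 s\<bar>)" for h
  have m1: "mod0 T1" using integrable_shiftc[OF kernelD(1)[OF k1]]
    unfolding shiftc_def mod0_def T1_def by simp
  have m2: "mod0 T2" using integrable_shiftc[OF kernelD(1)[OF k2]]
    unfolding shiftc_def mod0_def T2_def by simp
  have QE: "Q U \<in> EE T1 T2" if U: "U \<in> C01" for U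
  proof -
    have b: "\<forall>t. 0 \<le> fst (Q U t) \<and> fst (Q U t) \<le> 1 \<and> 0 \<le> snd (Q U t) \<and> snd (Q U t) \<le> 1"
      using conv_bounds[OF k1 g1m[OF U] g1b[OF U]] conv_bounds[OF k2 g2m[OF U] g2b[OF U]]
      by (simp add: Qeq)
    have d: "\<forall>t h. \<bar>fst (Q U (t+h)) - fst (Q U t)\<bar> \<le> T1 h \<and> \<bar>snd (Q U (t+h)) - snd (Q U t)\<bar> \<le> T2 h"
    proof (intro allI conjI)
      fix t h :: real
      have "fst (Q U (t+h)) - fst (Q U t) = - (conv (g1 U) l1 (t + h) - conv (g1 U) l1 t)"
        by (simp add: Qeq)
      then show "\<bar>fst (Q U (t+h)) - fst (Q U t)\<bar> \<le> T1 h"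
        using conv_shift[OF k1 g1m[OF U] g1b'[OF U], of t h] by (simp add: T1_def)
      have "snd (Q U (t+h)) - snd (Q U t) = conv (g2 U) l2 (t + h) - conv (g2 U) l2 t"
        by (simp add: Qeq)
      then show "\<bar>snd (Q U (t+h)) - snd (Q U t)\<bar> \<le> T2 h"
        using conv_shift[OF k2 g2m[OF U] g2b'[OF U], of t h] by (simp add: T2_def)
    qed
    show ?thesis using props_UCB[OF m1 m2 b d] b d by (simp add: EE_def)
  qed
  have EC: "EE T1 T2 \<subseteq> C01" by (auto simp: EE_def C01_def)
  have QC: "Q ` C01 \<subseteq> C01" using QE EC by blast
  have est: "\<exists>\<delta>>0. \<forall>V\<in>C01. DD U V < \<delta> \<longrightarrow> DD (Q U) (Q V) < \<epsilon>"
    if U: "U \<in> C01" and \<epsilon>: "\<epsilon> > 0" for U \<epsilon>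
  proof -
    have e4: "\<epsilon>/4 > 0" using \<epsilon> by simp
    obtain S1 where S1: "S1 \<ge> 0" and "\<exists>\<eta>>0. \<forall>U\<in>C01. \<forall>V\<in>C01. \<forall>t. (\<forall>y. \<bar>y\<bar> \<le> \<bar>t\<bar> + S1 \<longrightarrow> dist (U y) (V y) < \<eta>) \<longrightarrow>
       \<bar>conv (\<lambda>y. G1 r1 a1 (U y)) l1 t - conv (\<lambda>y. G1 r1 a1 (V y)) l1 t\<bar> \<le> \<epsilon>/4"
      using cont_est[OF k1 G1_cont G1_bounds[OF r1 a1] e4] by blast
    then obtain \<eta>1 where \<eta>1: "\<eta>1 > 0" and c1: "\<forall>U\<in>C01. \<forall>V\<in>C01. \<forall>t. (\<forall>y. \<bar>y\<bar> \<le> \<bar>t\<bar> + S1 \<longrightarrow> dist (U y) (V y) < \<eta>1) \<longrightarrow>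
       \<bar>conv (\<lambda>y. G1 r1 a1 (U y)) l1 t - conv (\<lambda>y. G1 r1 a1 (V y)) l1 t\<bar> \<le> \<epsilon>/4"
      by blast
    obtain S2 where S2: "S2 \<ge> 0" and "\<exists>\<eta>>0. \<forall>U\<in>C01. \<forall>V\<in>C01. \<forall>t. (\<forall>y. \<bar>y\<bar> \<le> \<bar>t\<bar> + S2 \<longrightarrow> dist (U y) (V y) < \<eta>) \<longrightarrow>
       \<bar>conv (\<lambda>y. G2 r2 a2 (U y)) l2 t - conv (\<lambda>y. G2 r2 a2 (V y)) l2 t\<bar> \<le> \<epsilon>/4"
      using cont_est[OF k2 G2_cont G2_bounds[OF r2 a2] e4] by blast
    then obtain \<eta>2 where \<eta>2: "\<eta>2 > 0" and c2: "\<forall>U\<in>C01. \<forall>V\<in>C01. \<forall>t. (\<forall>y. \<bar>y\<bar> \<le> \<bar>t\<bar> + S2 \<longrightarrow> dist (U y) (V y) < \<eta>2) \<longrightarrow>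
       \<bar>conv (\<lambda>y. G2 r2 a2 (U y)) l2 t - conv (\<lambda>y. G2 r2 a2 (V y)) l2 t\<bar> \<le> \<epsilon>/4"
      by blast
    define S where "S = max S1 S2"
    define \<eta> where "\<eta> = min \<eta>1 \<eta>2"
    have \<eta>0: "\<eta> > 0" using \<eta>1 \<eta>2 by (simp add: \<eta>_def)
    define R where "R = 2 / (\<epsilon>/2)"
    have R0: "R \<ge> 0" using \<epsilon> by (simp add: R_def)
    have wR: "wt R \<le> \<epsilon>/2" using wt_small[of "\<epsilon>/2"] \<epsilon> by (simp add: R_def)
    define \<delta> where "\<delta> = wt (R + S) * min 1 \<eta>"
    have \<delta>0: "\<delta> > 0" using wt_pos[of "R + S"] \<eta>0 by (simp add: \<delta>_def)
    show ?thesis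
    proof (rule exI[of _ \<delta>], rule conjI[OF \<delta>0], intro ballI impI)
      fix V assume V: "V \<in> C01" and dV: "DD U V < \<delta>"
      have near: "dist (U y) (V y) < \<eta>" if "\<bar>y\<bar> \<le> R + S" for y
        using DD_small_imp[of U V "R + S" \<eta> y] dV that \<eta>0 by (simp add: \<delta>_def)
      have "DD (Q U) (Q V) \<le> \<epsilon>/2"
      proof (rule DD_small_suff[OF _ wR R0])
        fix t :: real assume t: "\<bar>t\<bar> \<le> R"
        have n1: "\<forall>y. \<bar>y\<bar> \<le> \<bar>t\<bar> + S1 \<longrightarrow> dist (U y) (V y) < \<eta>1"
        proof (intro allI impI)
          fix y :: real assume "\<bar>y\<bar> \<le> \<bar>t\<bar> + S1"
          then have "\<bar>y\<bar> \<le> R + S" using t by (simp add: S_def)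
          then have "dist (U y) (V y) < \<eta>" by (rule near)
          then show "dist (U y) (V y) < \<eta>1" by (simp add: \<eta>_def)
        qed
        have n2: "\<forall>y. \<bar>y\<bar> \<le> \<bar>t\<bar> + S2 \<longrightarrow> dist (U y) (V y) < \<eta>2"
        proof (intro allI impI)
          fix y :: real assume "\<bar>y\<bar> \<le> \<bar>t\<bar> + S2"
          then have "\<bar>y\<bar> \<le> R + S" using t by (simp add: S_def)
          then have "dist (U y) (V y) < \<eta>" by (rule near)
          then show "dist (U y) (V y) < \<eta>2" by (simp add: \<eta>_def)
        qed
        have A: "\<bar>conv (g1 U) l1 t - conv (g1 V) l1 t\<bar> \<le> \<epsilon>/4"
          using c1 U V n1 unfolding g1_def by blast
        have B: "\<bar>conv (g2 U) l2 t - conv (g2 V) l2 t\<bar> \<le> \<epsilon>/4"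
          using c2 U V n2 unfolding g2_def by blast
        have fe: "fst (Q U t) - fst (Q V t) = - (conv (g1 U) l1 t - conv (g1 V) l1 t)"
          by (simp add: Qeq)
        have se: "snd (Q U t) - snd (Q V t) = conv (g2 U) l2 t - conv (g2 V) l2 t"
          by (simp add: Qeq)
        have "dist (Q U t) (Q V t) \<le> \<bar>fst (Q U t) - fst (Q V t)\<bar> + \<bar>snd (Q U t) - snd (Q V t)\<bar>"
          by (rule dist_pair_le)
        also have "\<dots> = \<bar>conv (g1 U) l1 t - conv (g1 V) l1 t\<bar> + \<bar>conv (g2 U) l2 t - conv (g2 V) l2 t\<bar>"
          unfolding fe se by simp
        also have "\<dots> \<le> \<epsilon>/2" using A B by linarith
        finally show "dist (Q U t) (Q V t) \<le> \<epsilon>/2" .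
      qed
      then show "DD (Q U) (Q V) < \<epsilon>" using \<epsilon> by linarith
    qed
  qed
  have cont: "continuous_map (subtopology DM.mtopology C01) (subtopology DM.mtopology C01) Q"
    unfolding continuous_map_in_subtopology
  proof
    show "continuous_map (subtopology DM.mtopology C01) DM.mtopology Q"
      unfolding DM.continuous_map_to_metric
    proof (intro ballI allI impI)
      fix U and \<epsilon> :: real assume U: "U \<in> topspace (subtopology DM.mtopology C01)" and \<epsilon>: "\<epsilon> > 0"
      have UC: "U \<in> C01" using U by simp
      have UU: "U \<in> UCB" using UC by (simp add: C01_def)
      obtain \<delta> where \<delta>: "\<delta> > 0" "\<forall>V\<in>C01. DD U V < \<delta> \<longrightarrow> DD (Q U) (Q V) < \<epsilon>"
        using est[OF UC \<epsilon>] by blast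
      show "\<exists>W. openin (subtopology DM.mtopology C01) W \<and> U \<in> W \<and> (\<forall>V\<in>W. Q V \<in> DM.mball (Q U) \<epsilon>)"
      proof (intro exI[of _ "C01 \<inter> DM.mball U \<delta>"] conjI ballI)
        show "openin (subtopology DM.mtopology C01) (C01 \<inter> DM.mball U \<delta>)"
          by (rule openin_subtopology_Int2) simp
        show "U \<in> C01 \<inter> DM.mball U \<delta>" using UC UU \<delta> by simp
        fix V assume V: "V \<in> C01 \<inter> DM.mball U \<delta>"
        then have VC: "V \<in> C01" and dV: "DD U V < \<delta>" by auto
        then have "DD (Q U) (Q V) < \<epsilon>" using \<delta> by blast
        moreover have "Q U \<in> UCB" "Q V \<in> UCB" using QC UC VC by (auto simp: C01_def)
        ultimately show "Q V \<in> DM.mball (Q U) \<epsilon>" by simp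
      qed
    qed
    show "Q \<in> topspace (subtopology DM.mtopology C01) \<rightarrow> C01" using QC by auto
  qed
  have ord: "\<forall>\<Phi>\<in>C01. \<forall>\<Psi>\<in>C01. fle \<Psi> \<Phi> \<longrightarrow> fle (Q \<Psi>) (Q \<Phi>)"
  proof (intro ballI impI)
    fix \<Phi> \<Psi> assume P: "\<Phi> \<in> C01" and S: "\<Psi> \<in> C01" and le: "fle \<Psi> \<Phi>"
    have p: "fst (\<Psi> y) \<le> fst (\<Phi> y)" "snd (\<Psi> y) \<le> snd (\<Phi> y)" for y using le by (auto simp: fle_def)
    have c1: "conv (g1 \<Phi>) l1 t \<le> conv (g1 \<Psi>) l1 t" for t
      by (rule conv_mono[OF k1 g1m[OF P] g1b'[OF P] g1m[OF S] g1b'[OF S]])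
         (simp add: g1_def G1_mono[OF r1 a1 C01_inbox[OF S] C01_inbox[OF P] p])
    have c2: "conv (g2 \<Psi>) l2 t \<le> conv (g2 \<Phi>) l2 t" for t
      by (rule conv_mono[OF k2 g2m[OF S] g2b'[OF S] g2m[OF P] g2b'[OF P]])
         (simp add: g2_def G2_mono[OF r2 a2 C01_inbox[OF S] C01_inbox[OF P] p])
    show "fle (Q \<Psi>) (Q \<Phi>)" unfolding fle_def using c1 c2 by (simp add: Qeq)
  qed
  have comp: "compactin DM.mtopology (DM.mtopology closure_of (Q ` C01))"
  proof (rule closed_compactin[OF EE_compact[OF m1 m2]])
    show "DM.mtopology closure_of (Q ` C01) \<subseteq> EE T1 T2"
      by (rule closure_of_minimal[OF _ EE_closed]) (use QE in blast)
    show "closedin DM.mtopology (DM.mtopology closure_of (Q ` C01))" by simp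
  qed
  show ?thesis unfolding compact_open_eq using QC cont ord comp by blast
qed

end
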